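(* Let $0<b_i\le a_i\le 1$ for $i=1,2$ and let $\mathcal{R}=\mathcal{R}_1\cup\mathcal{R}_2$ with $$\mathcal{R}_1=\left\{(\lambda_1,\lambda_2)\in\mathbb{R}_{\ge0}^2:\ \frac{\lambda_1}{a_1}+\frac{(a_1-b_1)\lambda_2}{a_1 b_2}<1,\ \lambda_2<b_2\right\},\quad \mathcal{R}_2=\left\{(\lambda_1,\lambda_2)\in\mathbb{R}_{\ge0}^2:\ \frac{\lambda_2}{a_2}+\frac{(a_2-b_2)\lambda_1}{a_2 b_1}<1,\ \lambda_1<b_1\right\}.$$ If $$\frac{b_1}{a_1}+\frac{b_2}{a_2}\ge 1,$$ then $\mathcal{R}$ is a convex set; when equality holds, $\mathcal{R}$ is the triangle $\{(\lambda_1,\lambda_2)\in\mathbb{R}_{\ge0}^2:\lambda_1/a_1+\lambda_2/a_2<1\}$ (the time-sharing region).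
   Context: $\mathcal{R}$ is the stability region of the two-user interference channel with bursty traffic, where $a_i$ is the probability that destination $D_i$ decodes the packet of source $S_i$ when only $S_i$ transmits and $b_i$ is the corresponding probability when both sources transmit. *)

theory Defs
  imports "HOL-Analysis.Analysis"
begin

definition stabR1 :: "real \<Rightarrow> real \<Rightarrow> real \<Rightarrow> real \<Rightarrow> (real \<times> real) set" where
  "stabR1 a1 a2 b1 b2 = {(l1, l2). 0 \<le> l1 \<and> 0 \<le> l2 \<and>
     l1 / a1 + (a1 - b1) * l2 / (a1 * b2) < 1 \<and> l2 < b2}"

definition stabR2 :: "real \<Rightarrow> real \<Rightarrow> real \<Rightarrow> real \<Rightarrow> (real \<times> real) set" where
  "stabR2 a1 a2 b1 b2 = {(l1, l2). 0 \<le> l1 \<and> 0 \<le> l2 \<and>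
     l2 / a2 + (a2 - b2) * l1 / (a2 * b1) < 1 \<and> l1 < b1}"

definition stabR :: "real \<Rightarrow> real \<Rightarrow> real \<Rightarrow> real \<Rightarrow> (real \<times> real) set" where
  "stabR a1 a2 b1 b2 = stabR1 a1 a2 b1 b2 \<union> stabR2 a1 a2 b1 b2"

definition timeshare :: "real \<Rightarrow> real \<Rightarrow> (real \<times> real) set" where
  "timeshare a1 a2 = {(l1, l2). 0 \<le> l1 \<and> 0 \<le> l2 \<and> l1 / a1 + l2 / a2 < 1}"

end

theory Submission
  imports Defs
begin

lemma R1_sub:
  fixes a1 a2 b1 b2 l1 l2 :: real
  assumes "0 < b1" "b1 \<le> a1" "0 < b2" "b2 \<le> a2" "b1 / a1 + b2 / a2 \<ge> 1"
    "0 \<le> l1" "0 \<le> l2" "l1 / a1 + (a1 - b1) * l2 / (a1 * b2) < 1" "l2 < b2"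
  shows "l2 / a2 + (a2 - b2) * l1 / (a2 * b1) < 1"
proof (cases "a2 = b2")
  case True
  then show ?thesis using assms by simp
next
  case False
  hence a2: "a2 > b2" using assms by simp
  have a1: "a1 > 0" using assms by simp
  have h1: "l1 * b2 < a1 * b2 - (a1 - b1) * l2"
    using assms(8) a1 assms(3) by (simp add: field_simps)
  have c: "a1 * a2 \<le> a2 * b1 + a1 * b2"
    using assms(5) a1 a2 assms(3) by (simp add: field_simps)
  have "(a2 - b2) * (l1 * b2) < (a2 - b2) * (a1 * b2 - (a1 - b1) * l2)"
    using h1 a2 by simp
  moreover have "b1*b2*l2 + (a2 - b2) * (a1 * b2 - (a1 - b1) * l2) \<le> a2*b1*b2"
  proof -
    have "(a2*b1 + a1*b2 - a1*a2) * (b2 - l2) \<ge> 0" using c assms(9) by simp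
    thus ?thesis by (simp add: algebra_simps)
  qed
  ultimately have "b1*b2*l2 + (a2 - b2) * (l1 * b2) < a2*b1*b2" by linarith
  hence "b2 * (b1*l2 + (a2 - b2) * l1) < b2 * (a2*b1)" by (simp add: algebra_simps)
  hence "b1*l2 + (a2 - b2) * l1 < a2*b1" using assms(3) by simp
  thus ?thesis using assms a2 by (simp add: field_simps)
qed

lemma char:
  fixes a1 a2 b1 b2 :: real
  assumes "0 < b1" "b1 \<le> a1" "0 < b2" "b2 \<le> a2" "b1 / a1 + b2 / a2 \<ge> 1"
  shows "stabR a1 a2 b1 b2 = {(l1, l2). 0 \<le> l1 \<and> 0 \<le> l2 \<and>
     l1 / a1 + (a1 - b1) * l2 / (a1 * b2) < 1 \<and> l2 / a2 + (a2 - b2) * l1 / (a2 * b1) < 1}"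
proof -
  have s2: "b2 / a2 + b1 / a1 \<ge> 1" using assms(5) by simp
  have A: "l2 < b2" if "0 \<le> l1" "0 \<le> l2" "l1 < b1 \<or> True"
      "l1 / a1 + (a1 - b1) * l2 / (a1 * b2) < 1" "l2 / a2 + (a2 - b2) * l1 / (a2 * b1) < 1"
      "\<not> l1 < b1" for l1 l2
  proof (rule ccontr)
    assume "\<not> l2 < b2"
    hence "l2 \<ge> b2" by simp
    have a1: "a1 > 0" using assms by simp
    show False
    proof (cases "a1 = b1")
      case True
      then show ?thesis using that a1 by (simp add: field_simps)
    next
      case False
      hence a1b: "a1 > b1" using assms by simp
      have "l1 < a1 - (a1 - b1) * l2 / b2" using that(4) a1 assms(3) by (simp add: field_simps)
      moreover have "(a1 - b1) * l2 / b2 \<ge> (a1 - b1)"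
      proof -
        have "(a1 - b1) * (l2 - b2) \<ge> 0" using \<open>l2 \<ge> b2\<close> a1b by simp
        thus ?thesis using assms(3) by (simp add: field_simps algebra_simps)
      qed
      ultimately show False using that(6) by linarith
    qed
  qed
  show ?thesis
    unfolding stabR_def stabR1_def stabR2_def
    apply (auto)
    using R1_sub[OF assms] apply blast
    using R1_sub[of b2 a2 b1 a1] assms s2 apply (simp add: add.commute mult.commute)
    using A apply blast
    done
qed

theorem mainTheorem5:
  fixes a1 a2 b1 b2 :: real
  assumes "0 < b1" "b1 \<le> a1" "a1 \<le> 1"
      and "0 < b2" "b2 \<le> a2" "a2 \<le> 1"
      and "b1 / a1 + b2 / a2 \<ge> 1"
  shows "convex (stabR a1 a2 b1 b2) \<and>
         (b1 / a1 + b2 / a2 = 1 \<longrightarrow> stabR a1 a2 b1 b2 = timeshare a1 a2)"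
proof
  note C = char[OF assms(1,2,4,5,7)]
  have e1: "\<And>l2. (a1 - b1) * l2 / (a1 * b2) = ((a1 - b1) / (a1 * b2)) * l2" by simp
  have e2: "\<And>l1. (a2 - b2) * l1 / (a2 * b1) = ((a2 - b2) / (a2 * b1)) * l1" by simp
  have e3: "\<And>l1 a::real. l1 / a = (1/a) * l1" by simp
  have S: "stabR a1 a2 b1 b2 = {x. inner (-1,0) x \<le> (0::real)} \<inter> {x. inner (0,-1) x \<le> (0::real)}
     \<inter> {x. inner (1/a1, (a1 - b1) / (a1 * b2)) x < 1} \<inter> {x. inner ((a2 - b2) / (a2 * b1), 1/a2) x < 1}"
    unfolding C by (auto simp: inner_prod_def mult.commute)
  show "convex (stabR a1 a2 b1 b2)" unfolding S
    by (intro convex_Int convex_halfspace_le convex_halfspace_lt)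
  show "b1 / a1 + b2 / a2 = 1 \<longrightarrow> stabR a1 a2 b1 b2 = timeshare a1 a2"
  proof
    assume eq: "b1 / a1 + b2 / a2 = 1"
    have a1: "a1 > 0" "a2 > 0" using assms by auto
    have c: "a1 * a2 = a2 * b1 + a1 * b2" using eq a1 by (simp add: field_simps)
    have k1: "(a1 - b1) / (a1 * b2) = 1 / a2" using c a1 assms(4) by (simp add: field_simps)
    have k2: "(a2 - b2) / (a2 * b1) = 1 / a1" using c a1 assms(1) by (simp add: field_simps)
    show "stabR a1 a2 b1 b2 = timeshare a1 a2"
      unfolding C timeshare_def apply (auto simp: k1 k2 e1 e2 simp del: times_divide_eq_left)
      apply (simp_all add: add.commute)
      done
  qed
qed

end
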